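(* Let $\lambda>0$ and $P(A)=\sum_{1\le i<j\le3}\lambda_i(A)\lambda_j(A)-\lambda\sum_{i=1}^3\lambda_i(A)$ for $A\in\mathbb{R}^{3\times3}$. Then (a) $\lambda\mathbf{1}$ is a point of rank-one convexity of $P$, i.e. for all $a,n\in\mathbb{R}^3$ the function $t\mapsto P(\lambda\mathbf{1}+t\,a\otimes n)$ is convex on $\mathbb{R}$; but (b) $P$ is not polyconvex at $\lambda\mathbf{1}$, i.e. there is no $(C_1,C_2,C_3)\in\mathbb{R}^{3\times3}\times\mathbb{R}^{3\times3}\times\mathbb{R}$ such that $P(A)\ge P(\lambda\mathbf{1})+C_1\cdot(A-\lambda\mathbf{1})+C_2\cdot(\operatorname{cof}A-\lambda^2\mathbf{1})+C_3(\det A-\lambda^3)$ for all $A\in\mathbb{R}^{3\times3}$.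
   Context: $\lambda_1(A),\lambda_2(A),\lambda_3(A)$ denote the singular values of $A$ (square roots of the eigenvalues of $A^TA$); $\mathbf{1}$ is the $3\times3$ identity; $A\cdot B=\operatorname{tr}(A^TB)$; $\operatorname{cof}A$ is the cofactor matrix; $a\otimes n$ is the matrix with entries $a_in_j$. *)

theory Defs
  imports "HOL-Analysis.Analysis" "HOL-Computational_Algebra.Polynomial"
begin

definition charpoly :: "real^'n^'n \<Rightarrow> real poly" where
  "charpoly M = det (\<chi> i j. (if i = j then [:0, 1:] else 0) - [:M $ i $ j:])"

definition eigenvalues_mset :: "real^'n^'n \<Rightarrow> real multiset" where
  "eigenvalues_mset M = proots (charpoly M)"

text \<open>Singular values: square roots of the eigenvalues of A^T A, listed in
  decreasing order lambda_1 \<ge> lambda_2 \<ge> lambda_3 (list index 0,1,2).\<close>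
definition singvals :: "real^'n^'n \<Rightarrow> real list" where
  "singvals A = rev (sorted_list_of_multiset (image_mset sqrt (eigenvalues_mset (transpose A ** A))))"

definition sv :: "real^3^3 \<Rightarrow> nat \<Rightarrow> real" where
  "sv A i = singvals A ! (i - 1)"

definition frob :: "real^'n^'n \<Rightarrow> real^'n^'n \<Rightarrow> real" where
  "frob A B = trace (transpose A ** B)"

text \<open>Cofactor matrix: (cof A)_{ij} = (-1)^{i+j} times the (i,j) minor, expressed as the
  determinant of A with row i replaced by the j-th unit vector (Laplace expansion).\<close>
definition cof :: "real^'n^'n \<Rightarrow> real^'n^'n" where
  "cof A = (\<chi> i j. det (\<chi> k. if k = i then axis j 1 else A $ k))"

definition tensor :: "real^'n \<Rightarrow> real^'n \<Rightarrow> real^'n^'n" where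
  "tensor a n = (\<chi> i j. a $ i * n $ j)"

definition Pfun :: "real \<Rightarrow> real^3^3 \<Rightarrow> real" where
  "Pfun lam A = (\<Sum>i\<in>{1..3}. \<Sum>j\<in>{i<..3}. sv A i * sv A j) - lam * (\<Sum>i\<in>{1..3}. sv A i)"

end

theory Submission
  imports Defs
begin

lemma poly_charpoly3:
  fixes M :: "real^3^3"
  shows "poly (charpoly M) x = det (\<chi> i j. (if i = j then x else 0) - M$i$j)"
  unfolding charpoly_def det_3 by (simp add: algebra_simps)

lemma Pfun_roots:
  fixes A :: "real^3^3"
  assumes h: "charpoly (transpose A ** A) = [:-p,1:] * [:-q,1:] * [:-r,1:]"
  shows "Pfun lam A = sqrt p* sqrt q + sqrt p* sqrt r + sqrt q* sqrt r - lam* (sqrt p + sqrt q + sqrt r)"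
proof -
  have "eigenvalues_mset (transpose A ** A) = {#p,q,r#}"
    unfolding eigenvalues_mset_def h
    by (subst proots_mult, simp, simp)+ (simp add: add_ac)
  then have ms: "mset (singvals A) = {#sqrt p, sqrt q, sqrt r#}"
    unfolding singvals_def by simp
  then have "length (singvals A) = 3"
    by (metis size_mset size_add_mset size_empty numeral_3_eq_3 One_nat_def)
  then obtain u v w where L: "singvals A = [u,v,w]"
    by (metis (no_types) length_0_conv length_Suc_conv numeral_3_eq_3)
  have m2: "{#u,v,w#} = {#sqrt p, sqrt q, sqrt r#}" using ms L by simp
  have s1: "u+v+w = sqrt p + sqrt q + sqrt r"
    using arg_cong[OF m2, of sum_mset] by (simp add: add_ac)
  have s2: "u^2+v^2+w^2 = (sqrt p)^2 + (sqrt q)^2 + (sqrt r)^2"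
    using arg_cong[OF m2, of "\<lambda>M. sum_mset (image_mset (\<lambda>x. x^2) M)"] by (simp add: add_ac)
  have e2: "u * v + u * w + v * w = sqrt p* sqrt q + sqrt p* sqrt r + sqrt q* sqrt r"
  proof -
    have "(u+v+w)^2 = (sqrt p + sqrt q + sqrt r)^2" using s1 by simp
    then show ?thesis using s2 by (simp add: power2_eq_square algebra_simps)
  qed
  have I1: "{1..3::nat} = {1,2,3}" by auto
  have I2: "{Suc 0<..3::nat} = {2,3}" "{2<..3::nat} = {3}" "{3<..3::nat} = {}" by auto
  have "Pfun lam A = sv A 1 * sv A 2 + sv A 1 * sv A 3 + sv A 2 * sv A 3 - lam * (sv A 1 + sv A 2 + sv A 3)"
    unfolding Pfun_def I1 by (simp add: I2 algebra_simps)
  then have "Pfun lam A = u * v + u * w + v * w - lam * (u + v + w)"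
    unfolding sv_def using L by simp
  then show ?thesis using e2 s1 by simp
qed

definition diag3 :: "real \<Rightarrow> real \<Rightarrow> real \<Rightarrow> real^3^3" where
  "diag3 x y z = (\<chi> i j. if i = j then vector [x,y,z] $ i else 0)"

lemma diag3_nth: "diag3 x y z $ i $ j = (if i = j then vector [x,y,z] $ i else 0)"
  unfolding diag3_def by simp

lemma Pfun_diag3: "Pfun lam (diag3 x y z) = \<bar>x\<bar> * \<bar>y\<bar> + \<bar>x\<bar> * \<bar>z\<bar> + \<bar>y\<bar> * \<bar>z\<bar> - lam * (\<bar>x\<bar> + \<bar>y\<bar> + \<bar>z\<bar>)"
proof -
  have "charpoly (transpose (diag3 x y z) ** diag3 x y z) = [:-(x^2),1:] * [:-(y^2),1:] * [:-(z^2),1:]"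
    unfolding poly_eq_poly_eq_iff[symmetric]
  proof
    fix t
    show "poly (charpoly (transpose (diag3 x y z) ** diag3 x y z)) t = poly ([:-(x^2),1:] * [:-(y^2),1:] * [:-(z^2),1:]) t"
      unfolding poly_charpoly3 det_3
      by (simp add: matrix_matrix_mult_def transpose_def sum_3 diag3_nth power2_eq_square) (simp add: algebra_simps)
  qed
  from Pfun_roots[OF this, of lam] show ?thesis by simp
qed

lemma det_diag3: "det (diag3 x y z) = x * y * z"
  unfolding det_3 by (simp add: diag3_nth)

lemma cof_diag3: "cof (diag3 x y z) = diag3 (y * z) (x * z) (x * y)"
  unfolding cof_def
  by (simp add: vec_eq_iff forall_3 det_3 diag3_nth axis_def)

lemma frob_diag3: "frob C (diag3 x y z) = C$1$1 * x + C$2$2 * y + C$3$3 * z"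
  unfolding frob_def trace_def
  by (simp add: matrix_matrix_mult_def transpose_def sum_3 diag3_nth)

lemma diag3_id: "lam *\<^sub>R mat 1 = diag3 lam lam lam"
  by (simp add: vec_eq_iff forall_3 diag3_nth mat_def)

lemma diag3_diff: "diag3 x y z - diag3 a b c = diag3 (x - a) (y - b) (z - c)"
  by (simp add: vec_eq_iff forall_3 diag3_nth)

lemma partb:
  fixes lam :: real
  assumes lam: "lam > 0"
  shows "\<not> (\<exists>(C1 :: real^3^3) (C2 :: real^3^3) (C3 :: real). \<forall>A :: real^3^3.
          Pfun lam A \<ge> Pfun lam (lam *\<^sub>R mat 1) + frob C1 (A - lam *\<^sub>R mat 1)
            + frob C2 (cof A - lam^2 *\<^sub>R mat 1) + C3 * (det A - lam^3))"
proof
  assume "\<exists>(C1 :: real^3^3) (C2 :: real^3^3) (C3 :: real). \<forall>A :: real^3^3.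
          Pfun lam A \<ge> Pfun lam (lam *\<^sub>R mat 1) + frob C1 (A - lam *\<^sub>R mat 1)
            + frob C2 (cof A - lam^2 *\<^sub>R mat 1) + C3 * (det A - lam^3)"
  then obtain C1 C2 :: "real^3^3" and C3 :: real where H: "\<And>A. Pfun lam A \<ge> Pfun lam (lam *\<^sub>R mat 1) + frob C1 (A - lam *\<^sub>R mat 1)
            + frob C2 (cof A - lam^2 *\<^sub>R mat 1) + C3 * (det A - lam^3)" by blast
  define c1 where "c1 = C1$1$1 / lam"
  define c2 where "c2 = C1$2$2 / lam"
  define c3 where "c3 = C1$3$3 / lam"
  define d1 where "d1 = C2$1$1"
  define d2 where "d2 = C2$2$2"
  define d3 where "d3 = C2$3$3"
  define e where "e = C3 * lam"
  have key: "\<bar>y1\<bar> * \<bar>y2\<bar> + \<bar>y1\<bar> * \<bar>y3\<bar> + \<bar>y2\<bar> * \<bar>y3\<bar> - (\<bar>y1\<bar> + \<bar>y2\<bar> + \<bar>y3\<bar>)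
     \<ge> c1 * (y1 - 1) + c2 * (y2 - 1) + c3 * (y3 - 1) + d1 * (y2 * y3 - 1) + d2 * (y1 * y3 - 1)
       + d3 * (y1 * y2 - 1) + e * (y1 * y2 * y3 - 1)" for y1 y2 y3
  proof -
    have h: "Pfun lam (diag3 (lam * y1) (lam * y2) (lam * y3)) \<ge> Pfun lam (diag3 lam lam lam)
       + frob C1 (diag3 (lam * y1 - lam) (lam * y2 - lam) (lam * y3 - lam))
       + frob C2 (diag3 (lam * y2 * (lam * y3) - lam^2) (lam * y1 * (lam * y3) - lam^2) (lam * y1 * (lam * y2) - lam^2))
       + C3 * (lam * y1 * (lam * y2) * (lam * y3) - lam^3)"
      using H[of "diag3 (lam * y1) (lam * y2) (lam * y3)"]
      by (simp only: diag3_id diag3_diff cof_diag3 det_diag3)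
    have ab: "\<bar>lam * y\<bar> = lam * \<bar>y\<bar>" for y using lam by (simp add: abs_mult)
    have L: "Pfun lam (diag3 (lam * y1) (lam * y2) (lam * y3)) = lam^2 * (\<bar>y1\<bar> * \<bar>y2\<bar> + \<bar>y1\<bar> * \<bar>y3\<bar> + \<bar>y2\<bar> * \<bar>y3\<bar> - (\<bar>y1\<bar> + \<bar>y2\<bar> + \<bar>y3\<bar>))"
      unfolding Pfun_diag3 ab by (simp add: power2_eq_square algebra_simps)
    have R: "Pfun lam (diag3 lam lam lam)
       + frob C1 (diag3 (lam * y1 - lam) (lam * y2 - lam) (lam * y3 - lam))
       + frob C2 (diag3 (lam * y2 * (lam * y3) - lam^2) (lam * y1 * (lam * y3) - lam^2) (lam * y1 * (lam * y2) - lam^2))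
       + C3 * (lam * y1 * (lam * y2) * (lam * y3) - lam^3) = lam^2 * (c1 * (y1 - 1) + c2 * (y2 - 1) + c3 * (y3 - 1) + d1 * (y2 * y3 - 1) + d2 * (y1 * y3 - 1)
       + d3 * (y1 * y2 - 1) + e * (y1 * y2 * y3 - 1))"
      unfolding Pfun_diag3 frob_diag3 c1_def c2_def c3_def d1_def d2_def d3_def e_def
      using lam by (simp add: abs_of_pos power2_eq_square power3_eq_cube field_simps)
    show ?thesis using h unfolding L R using lam by simp
  qed
  have A1: "c1 + c2 + c3 + 2 * (d1 + d2 + d3) + 3 * e = 3"
    using key[of 2 1 1] key[of 1 2 1] key[of 1 1 2] key[of 0 1 1] key[of 1 0 1] key[of 1 1 0]
    by simp
  have A2: "d1 + d2 + d3 + 3 * e = 3"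
    using key[of 2 2 1] key[of 2 1 2] key[of 1 2 2]
    key[of 2 0 1] key[of 2 1 0] key[of 0 2 1] key[of 0 1 2] key[of 1 2 0] key[of 1 0 2] A1
    by simp
  have A3: "e = 0"
    using key[of 2 2 2] key[of 0 0 0] A1 A2 by simp
  show False
    using key[of "-1" "-1" 0] key[of "-1" 0 "-1"] key[of 0 "-1" "-1"] A1 A2 A3 by simp
qed

lemma convex_abs_affine: "convex_on UNIV (\<lambda>t::real. \<bar>p + q * t\<bar> - c)"
  unfolding convex_on_def
proof (intro conjI ballI allI impI)
  show "convex (UNIV :: real set)" by simp
  fix x y u v :: real
  assume uv: "u \<ge> 0" "v \<ge> 0" "u + v = 1"
  have e: "p + q * (u *\<^sub>R x + v *\<^sub>R y) = u * (p + q * x) + v * (p + q * y)"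
  proof -
    have "p = (u + v) * p" using uv(3) by simp
    also have "\<dots> = u * p + v * p" by (rule distrib_right)
    finally show ?thesis by (simp add: distrib_left)
  qed
  have "\<bar>u * (p + q * x) + v * (p + q * y)\<bar> \<le> \<bar>u * (p + q * x)\<bar> + \<bar>v * (p + q * y)\<bar>"
    by (rule abs_triangle_ineq)
  also have "\<dots> = u * \<bar>p + q * x\<bar> + v * \<bar>p + q * y\<bar>"
    using uv by (simp add: abs_mult)
  finally have 1: "\<bar>p + q * (u *\<^sub>R x + v *\<^sub>R y)\<bar> \<le> u * \<bar>p + q * x\<bar> + v * \<bar>p + q * y\<bar>"
    unfolding e .
  have 2: "u * c + v * c = c" using uv(3) by (metis distrib_right mult_1)
  have 3: "u * (\<bar>p + q * x\<bar> - c) + v * (\<bar>p + q * y\<bar> - c) = u * \<bar>p + q * x\<bar> + v * \<bar>p + q * y\<bar> - (u * c + v * c)"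
    by (simp add: right_diff_distrib)
  show "\<bar>p + q * (u *\<^sub>R x + v *\<^sub>R y)\<bar> - c \<le> u * (\<bar>p + q * x\<bar> - c) + v * (\<bar>p + q * y\<bar> - c)"
    unfolding 3 2 using 1 by linarith
qed
lemma det_rank2:
  fixes y :: real and a n u w :: "real^3"
  shows "det (\<chi> i j. (if i = j then y else 0) - (a$i * u$j + n$i * w$j)) =
    y^3 - (a \<bullet> u + n \<bullet> w) * y^2 + ((a \<bullet> u) * (n \<bullet> w) - (a \<bullet> w) * (n \<bullet> u)) * y"
  unfolding det_3 inner_vec_def sum_3
  by (simp add: power2_eq_square power3_eq_cube) (simp add: algebra_simps)

lemma MtM_entry:
  fixes lam t :: real and a n :: "real^3"
  shows "(transpose (lam *\<^sub>R mat 1 + t *\<^sub>R tensor a n) ** (lam *\<^sub>R mat 1 + t *\<^sub>R tensor a n)) $ i $ j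
    = (if i = j then lam^2 else 0) + (a$i * (lam * t * n$j) + n$i * (lam * t * a$j + t^2 * (a \<bullet> a) * n$j))"
  using exhaust_3[of i] exhaust_3[of j]
  by (auto simp: matrix_matrix_mult_def transpose_def sum_3 tensor_def mat_def inner_vec_def power2_eq_square algebra_simps)

lemma Pfun_rank1:
  fixes lam t :: real and a n :: "real^3"
  assumes lam: "lam > 0"
  shows "Pfun lam (lam *\<^sub>R mat 1 + t *\<^sub>R tensor a n) = \<bar>lam^2 + (lam * (a \<bullet> n)) * t\<bar> - lam^2"
proof -
  define M where "M = lam *\<^sub>R mat 1 + t *\<^sub>R tensor a n"
  define k where "k = a \<bullet> n"
  define na where "na = a \<bullet> a"
  define nn where "nn = n \<bullet> n"
  define S where "S = 2 * lam^2 + 2 * lam * t * k + t^2 * na * nn"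
  define Pd where "Pd = lam^2 + lam * t * k"
  define D where "D = S^2 - 4 * Pd^2"
  have na0: "na \<ge> 0" "nn \<ge> 0" unfolding na_def nn_def by simp_all
  have cs: "k^2 \<le> na * nn" unfolding k_def na_def nn_def using Cauchy_Schwarz_ineq[of a n] by simp
  have Dfac: "D = (t^2 * na * nn) * ((2 * lam + t * k)^2 + t^2 * (na * nn - k^2))"
    unfolding D_def S_def Pd_def by (simp add: power2_eq_square algebra_simps)
  have D0: "D \<ge> 0" unfolding Dfac using na0 cs by (intro mult_nonneg_nonneg add_nonneg_nonneg) auto
  have S0: "S \<ge> 0"
  proof -
    have "S = (lam + t * k)^2 + lam^2 + t^2 * (na * nn - k^2)" unfolding S_def by (simp add: power2_eq_square algebra_simps)
    moreover have "t^2 * (na * nn - k^2) \<ge> 0" using cs by simp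
    moreover have "(lam + t * k)^2 \<ge> 0" "lam^2 \<ge> 0" by simp_all
    ultimately show ?thesis by linarith
  qed
  have DS: "sqrt D \<le> S"
  proof -
    have "D \<le> S^2" unfolding D_def by simp
    then have "sqrt D \<le> sqrt (S^2)" by (rule real_sqrt_le_mono)
    then show ?thesis using S0 by simp
  qed
  define r1 where "r1 = (S + sqrt D) / 2"
  define r2 where "r2 = (S - sqrt D) / 2"
  have r: "r1 + r2 = S" "r1 * r2 = Pd^2"
    unfolding r1_def r2_def using D0 by (simp_all add: field_simps power2_eq_square D_def)
  have r0: "r1 \<ge> 0" "r2 \<ge> 0" unfolding r1_def r2_def using S0 DS D0 by simp_all
  have cp: "charpoly (transpose M ** M) = [:-(lam^2),1:] * [:-r1,1:] * [:-r2,1:]"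
    unfolding poly_eq_poly_eq_iff[symmetric]
  proof
    fix x
    have "(x - r1) * (x - r2) = x^2 - (r1 + r2) * x + r1 * r2" by (simp add: power2_eq_square algebra_simps)
    then have rr: "(x - r1) * (x - r2) = x^2 - S * x + Pd^2" using r by simp
    have "poly ([:-(lam^2),1:] * [:-r1,1:] * [:-r2,1:]) x = (x - lam^2) * ((x - r1) * (x - r2))"
      by (simp add: algebra_simps)
    then have 1: "poly ([:-(lam^2),1:] * [:-r1,1:] * [:-r2,1:]) x = (x - lam^2) * (x^2 - S * x + Pd^2)"
      unfolding rr .
    have mat: "(\<chi> i j. (if i = j then x else 0) - (transpose M ** M)$i$j) =
      (\<chi> i j. (if i = j then x - lam^2 else 0) - (a$i * ((lam * t) *\<^sub>R n)$j + n$i * ((lam * t) *\<^sub>R a + (t^2 * na) *\<^sub>R n)$j))"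
      unfolding M_def MtM_entry na_def by (simp add: vec_eq_iff algebra_simps)
    have 2: "poly (charpoly (transpose M ** M)) x = (x - lam^2) * (x^2 - S * x + Pd^2)"
      unfolding poly_charpoly3 mat det_rank2
      by (simp add: inner_add_right k_def[symmetric] na_def[symmetric] nn_def[symmetric] inner_commute[of n a] S_def Pd_def power2_eq_square power3_eq_cube algebra_simps)
    show "poly (charpoly (transpose M ** M)) x = poly ([:-(lam^2),1:] * [:-r1,1:] * [:-r2,1:]) x"
      using 1 2 by simp
  qed
  have "Pfun lam M = sqrt (lam^2) * sqrt r1 + sqrt (lam^2) * sqrt r2 + sqrt r1 * sqrt r2 - lam * (sqrt (lam^2) + sqrt r1 + sqrt r2)"
    by (rule Pfun_roots[OF cp])
  also have "\<dots> = sqrt (r1 * r2) - lam^2" using lam by (simp add: real_sqrt_mult power2_eq_square algebra_simps)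
  also have "\<dots> = \<bar>Pd\<bar> - lam^2" using r by simp
  finally show ?thesis unfolding M_def Pd_def k_def by (simp add: algebra_simps)
qed

lemma parta:
  fixes lam :: real
  assumes "lam > 0"
  shows "\<forall>a n :: real^3. convex_on UNIV (\<lambda>t. Pfun lam (lam *\<^sub>R mat 1 + t *\<^sub>R tensor a n))"
  using Pfun_rank1[OF assms] convex_abs_affine by simp

theorem proposition2p3:
  fixes lam :: real
  assumes "lam > 0"
  shows "(\<forall>a n :: real^3. convex_on UNIV (\<lambda>t. Pfun lam (lam *\<^sub>R mat 1 + t *\<^sub>R tensor a n)))
    \<and> \<not> (\<exists>(C1 :: real^3^3) (C2 :: real^3^3) (C3 :: real). \<forall>A :: real^3^3.
          Pfun lam A \<ge> Pfun lam (lam *\<^sub>R mat 1) + frob C1 (A - lam *\<^sub>R mat 1)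
            + frob C2 (cof A - lam^2 *\<^sub>R mat 1) + C3 * (det A - lam^3))"
  using parta[OF assms] partb[OF assms] by blast

end
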